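(* Fix $t>0$ and $\alpha\ge 0$. For every $\phi\in C([0,t];\mathbb{R})$: (1) $\mathcal{T}(T_\alpha(\phi))(s)=\mathbb{T}_{\log\{e^{2\phi_t}/(1+\alpha A_t(\phi))\}}(\phi)(s)$ for $0\le s\le t$; (2) $T_\alpha(\mathcal{T}(\phi))(s)=\mathbb{T}_{\log\{e^{2\phi_t}+\alpha A_t(\phi)\}}(\phi)(s)$ for $0\le s\le t$.
   Context: For $\phi\in C([0,t];\mathbb{R})$ let $A_s(\phi)=\int_0^s e^{2\phi_u}\,du$. For $z\in\mathbb{R}$, $\mathbb{T}_z(\phi)(s)=\phi_s-\log\{1+\frac{A_s(\phi)}{A_t(\phi)}(e^z-1)\}$, $0\le s\le t$; $\mathcal{T}(\phi)(s)=\mathbb{T}_{2\phi_t}(\phi)(s)$; and $T_\alpha(\phi)(s)=\phi_s-\log\{1+\alpha A_s(\phi)\}$, $0\le s\le t$. *)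

theory Defs
  imports "HOL-Analysis.Analysis"
begin

text \<open>Paths phi in C([0,t];R) are modelled as functions real => real, continuous on {0..t};
  only their values on [0,t] matter.\<close>

definition A :: "(real \<Rightarrow> real) \<Rightarrow> real \<Rightarrow> real" where
  "A \<phi> s = integral {0..s} (\<lambda>u. exp (2 * \<phi> u))"

definition TT :: "real \<Rightarrow> real \<Rightarrow> (real \<Rightarrow> real) \<Rightarrow> real \<Rightarrow> real" where
  "TT t z \<phi> s = \<phi> s - ln (1 + A \<phi> s / A \<phi> t * (exp z - 1))"

definition Tcal :: "real \<Rightarrow> (real \<Rightarrow> real) \<Rightarrow> real \<Rightarrow> real" where
  "Tcal t \<phi> = TT t (2 * \<phi> t) \<phi>"

definition Talpha :: "real \<Rightarrow> (real \<Rightarrow> real) \<Rightarrow> real \<Rightarrow> real" where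
  "Talpha \<alpha> \<phi> s = \<phi> s - ln (1 + \<alpha> * A \<phi> s)"

end

theory Submission
  imports Defs
begin

lemma A_cont_exp:
  fixes \<phi> :: "real \<Rightarrow> real"
  assumes "continuous_on {0..t} \<phi>"
  shows "continuous_on {0..t} (\<lambda>u. exp (2 * \<phi> u))"
  using assms by (intro continuous_intros)

lemma A_nonneg:
  fixes \<phi> :: "real \<Rightarrow> real"
  assumes "continuous_on {0..t} \<phi>" "s \<in> {0..t}"
  shows "A \<phi> s \<ge> 0"
proof -
  have "continuous_on {0..s} (\<lambda>u. exp (2 * \<phi> u))"
    by (rule continuous_on_subset[OF A_cont_exp[OF assms(1)]]) (use assms in auto)
  then show ?thesis
    unfolding A_def by (intro integral_nonneg integrable_continuous_interval) auto
qed

lemma A_mono: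
  fixes \<phi> :: "real \<Rightarrow> real"
  assumes "continuous_on {0..t} \<phi>" "s \<in> {0..t}"
  shows "A \<phi> s \<le> A \<phi> t"
  unfolding A_def
proof (rule integral_subset_le)
  show "(\<lambda>u. exp (2 * \<phi> u)) integrable_on {0..s}"
    using assms by (auto intro!: integrable_continuous_interval
      continuous_on_subset[OF A_cont_exp[OF assms(1)]])
  show "(\<lambda>u. exp (2 * \<phi> u)) integrable_on {0..t}"
    using assms by (auto intro!: integrable_continuous_interval A_cont_exp)
qed (use assms in auto)

lemma A_pos:
  fixes \<phi> :: "real \<Rightarrow> real"
  assumes "continuous_on {0..t} \<phi>" "t > 0"
  shows "A \<phi> t > 0"
proof -
  have "A \<phi> t \<ge> 0" using A_nonneg[OF assms(1), of t] assms by auto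
  moreover have "A \<phi> t \<noteq> 0"
  proof
    assume "A \<phi> t = 0"
    then have "integral (cbox 0 t) (\<lambda>u. exp (2 * \<phi> u)) = 0" by (simp add: A_def)
    then have "\<forall>x\<in>cbox 0 t. exp (2 * \<phi> x) = 0"
      using integral_cbox_eq_0_iff[of 0 t "\<lambda>u. exp (2 * \<phi> u)"] A_cont_exp[OF assms(1)] assms(2)
      by auto
    then show False using assms(2) by auto
  qed
  ultimately show ?thesis by auto
qed

lemma A_transform:
  fixes \<phi> :: "real \<Rightarrow> real"
  assumes cont: "continuous_on {0..t} \<phi>" and pos: "\<And>s. s \<in> {0..t} \<Longrightarrow> 1 + c * A \<phi> s > 0"
    and s: "s \<in> {0..t}"
  shows "A (\<lambda>u. \<phi> u - ln (1 + c * A \<phi> u)) s = A \<phi> s / (1 + c * A \<phi> s)"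
proof -
  define F where "F = (\<lambda>x. A \<phi> x / (1 + c * A \<phi> x))"
  have dA: "(A \<phi> has_real_derivative exp (2 * \<phi> x)) (at x within {0..t})" if "x \<in> {0..t}" for x
    using integral_has_vector_derivative[OF A_cont_exp[OF cont] that]
    unfolding A_def has_real_derivative_iff_has_vector_derivative by simp
  have dF: "(F has_real_derivative exp (2 * (\<phi> x - ln (1 + c * A \<phi> x)))) (at x within {0..t})"
    if x: "x \<in> {0..t}" for x
  proof -
    have p: "1 + c * A \<phi> x > 0" using pos x by auto
    have "(F has_real_derivative (exp (2 * \<phi> x) * (1 + c * A \<phi> x) - A \<phi> x * (c * exp (2 * \<phi> x)))
            / ((1 + c * A \<phi> x) * (1 + c * A \<phi> x))) (at x within {0..t})"
    proof -
      have d1: "((\<lambda>y. 1 + c * A \<phi> y) has_real_derivative 0 + c * exp (2 * \<phi> x)) (at x within {0..t})"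
        by (intro DERIV_add DERIV_cmult DERIV_const dA[OF x])
      show ?thesis unfolding F_def using DERIV_divide[OF dA[OF x] d1] p by simp
    qed
    moreover have "(exp (2 * \<phi> x) * (1 + c * A \<phi> x) - A \<phi> x * (c * exp (2 * \<phi> x)))
            / ((1 + c * A \<phi> x) * (1 + c * A \<phi> x)) = exp (2 * (\<phi> x - ln (1 + c * A \<phi> x)))"
    proof -
      have "exp (2 * (\<phi> x - ln (1 + c * A \<phi> x))) = exp (2 * \<phi> x) / exp (ln (1 + c * A \<phi> x)) ^ 2"
        by (simp add: exp_diff right_diff_distrib exp_of_nat_mult[symmetric] power2_eq_square exp_add[symmetric])
      also have "\<dots> = exp (2 * \<phi> x) / (1 + c * A \<phi> x) ^ 2" using p by simp
      finally show ?thesis using p by (simp add: field_simps power2_eq_square)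
    qed
    ultimately show ?thesis by simp
  qed
  have "((\<lambda>u. exp (2 * (\<phi> u - ln (1 + c * A \<phi> u)))) has_integral F s - F 0) {0..s}"
  proof (rule fundamental_theorem_of_calculus)
    show "0 \<le> s" using s by auto
    fix x assume "x \<in> {0..s}"
    then have "x \<in> {0..t}" using s by auto
    from dF[OF this] show "(F has_vector_derivative exp (2 * (\<phi> x - ln (1 + c * A \<phi> x)))) (at x within {0..s})"
      unfolding has_real_derivative_iff_has_vector_derivative
      by (rule has_vector_derivative_within_subset) (use s in auto)
  qed
  moreover have "F 0 = 0" by (simp add: F_def A_def)
  ultimately have "((\<lambda>u. exp (2 * (\<phi> u - ln (1 + c * A \<phi> u)))) has_integral F s) {0..s}"
    by simp
  from integral_unique[OF this] show ?thesis
    unfolding F_def by (subst A_def) simp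
qed

theorem lemma4p1:
  fixes t \<alpha> :: real and \<phi> :: "real \<Rightarrow> real"
  assumes "t > 0" and "\<alpha> \<ge> 0" and "continuous_on {0..t} \<phi>"
  shows "(\<forall>s\<in>{0..t}. Tcal t (Talpha \<alpha> \<phi>) s
            = TT t (ln (exp (2 * \<phi> t) / (1 + \<alpha> * A \<phi> t))) \<phi> s)
       \<and> (\<forall>s\<in>{0..t}. Talpha \<alpha> (Tcal t \<phi>) s
            = TT t (ln (exp (2 * \<phi> t) + \<alpha> * A \<phi> t)) \<phi> s)"
proof -
  define b where "b = A \<phi> t"
  define E where "E = exp (2 * \<phi> t)"
  have b: "b > 0" using A_pos[OF assms(3,1)] by (simp add: b_def)
  have E: "E > 0" by (simp add: E_def)
  have ab: "0 \<le> A \<phi> s" "A \<phi> s \<le> b" if "s \<in> {0..t}" for s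
    using A_nonneg[OF assms(3) that] A_mono[OF assms(3) that] by (auto simp: b_def)
  have key: "1 + x * (y - 1) > 0" if "0 \<le> x" "x \<le> 1" "y > 0" for x y :: real
  proof -
    have "1 + x * (y - 1) = (1 - x) + x * y" by algebra
    moreover have "x * y \<ge> 0" using that by simp
    moreover have "(1 - x) + x * y > 0"
    proof (cases "x = 1")
      case True then show ?thesis using that by simp
    next
      case False then show ?thesis using that \<open>x * y \<ge> 0\<close> by linarith
    qed
    ultimately show ?thesis by simp
  qed
  have t: "t \<in> {0..t}" using assms(1) by auto
  show ?thesis
  proof (intro conjI ballI)
    fix s assume s: "s \<in> {0..t}"
    define a where "a = A \<phi> s"
    have a0: "0 \<le> a" and ab': "a \<le> b" using ab[OF s] by (auto simp: a_def)
    have psi: "Talpha \<alpha> \<phi> = (\<lambda>u. \<phi> u - ln (1 + \<alpha> * A \<phi> u))"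
      by (rule ext) (simp add: Talpha_def)
    have posa: "1 + \<alpha> * A \<phi> u > 0" if "u \<in> {0..t}" for u
      using ab[OF that] assms(2) by (simp add: add_pos_nonneg)
    have As: "A (Talpha \<alpha> \<phi>) s = a / (1 + \<alpha> * a)"
      unfolding psi a_def by (rule A_transform[OF assms(3) posa s])
    have At: "A (Talpha \<alpha> \<phi>) t = b / (1 + \<alpha> * b)"
      unfolding psi b_def by (rule A_transform[OF assms(3) posa t])
    have pa: "1 + \<alpha> * a > 0" and pb: "1 + \<alpha> * b > 0"
      using a0 b assms(2) by (auto simp: add_pos_nonneg)
    have e1: "exp (2 * Talpha \<alpha> \<phi> t) = E / (1 + \<alpha> * b) ^ 2"
    proof -
      have "exp (2 * Talpha \<alpha> \<phi> t) = E / exp (ln (1 + \<alpha> * b)) ^ 2"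
        by (simp add: Talpha_def E_def b_def exp_diff right_diff_distrib exp_of_nat_mult[symmetric] power2_eq_square exp_add[symmetric])
      then show ?thesis using pb by simp
    qed
    define x where "x = (a / (1 + \<alpha> * a)) / (b / (1 + \<alpha> * b))"
    have x0: "0 \<le> x" using a0 b pa pb by (simp add: x_def)
    have x1: "x \<le> 1"
    proof -
      have "a * (1 + \<alpha> * b) \<le> b * (1 + \<alpha> * a)" using ab' by (simp add: algebra_simps)
      moreover have "x = (a * (1 + \<alpha> * b)) / (b * (1 + \<alpha> * a))"
        unfolding x_def using pa pb b by (simp add: field_simps)
      moreover have "b * (1 + \<alpha> * a) > 0" using pa b by simp
      ultimately show ?thesis by (simp add: pos_divide_le_eq)
    qed
    have X: "1 + x * (E / (1 + \<alpha> * b) ^ 2 - 1) > 0"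
      using key[OF x0 x1, of "E / (1 + \<alpha> * b) ^ 2"] E pb by simp
    have alg: "(1 + \<alpha> * a) * (1 + x * (E / (1 + \<alpha> * b) ^ 2 - 1)) = 1 + a / b * (E / (1 + \<alpha> * b) - 1)"
    proof -
      define p where "p = 1 + \<alpha> * a"
      define q where "q = 1 + \<alpha> * b"
      have pp: "p \<noteq> 0" "q \<noteq> 0" "b \<noteq> 0" using pa pb b by (auto simp: p_def q_def)
      have "p * (1 + (a / p) / (b / q) * (E / q ^ 2 - 1)) = p - a * q / b + a * E / (b * q)"
        using pp by (simp add: field_simps power2_eq_square)
      also have "p - a * q / b = 1 - a / b"
        using pp by (simp add: p_def q_def field_simps)
      finally have h: "p * (1 + (a / p) / (b / q) * (E / q ^ 2 - 1)) = 1 - a / b + a * E / (b * q)" .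
      have "1 + a / b * (E / q - 1) = 1 - a / b + a * E / (b * q)"
        using pp by (simp add: field_simps)
      with h have "p * (1 + (a / p) / (b / q) * (E / q ^ 2 - 1)) = 1 + a / b * (E / q - 1)"
        by simp
      then show ?thesis by (simp add: x_def p_def q_def)
    qed
    have "Tcal t (Talpha \<alpha> \<phi>) s = \<phi> s - ln (1 + \<alpha> * a) - ln (1 + x * (E / (1 + \<alpha> * b) ^ 2 - 1))"
      unfolding Tcal_def TT_def As At e1 x_def by (simp add: Talpha_def a_def)
    also have "\<dots> = \<phi> s - ln ((1 + \<alpha> * a) * (1 + x * (E / (1 + \<alpha> * b) ^ 2 - 1)))"
      using ln_mult_pos[OF pa X] by simp
    also have "\<dots> = \<phi> s - ln (1 + a / b * (E / (1 + \<alpha> * b) - 1))" by (simp only: alg)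
    also have "\<dots> = TT t (ln (exp (2 * \<phi> t) / (1 + \<alpha> * A \<phi> t))) \<phi> s"
      unfolding TT_def using E pb by (simp add: E_def a_def b_def)
    finally show "Tcal t (Talpha \<alpha> \<phi>) s = TT t (ln (exp (2 * \<phi> t) / (1 + \<alpha> * A \<phi> t))) \<phi> s" .
  next
    fix s assume s: "s \<in> {0..t}"
    define a where "a = A \<phi> s"
    have a0: "0 \<le> a" and ab': "a \<le> b" using ab[OF s] by (auto simp: a_def)
    define c where "c = (E - 1) / b"
    have chi: "Tcal t \<phi> = (\<lambda>u. \<phi> u - ln (1 + c * A \<phi> u))"
      by (rule ext) (simp add: Tcal_def TT_def c_def E_def b_def mult.commute)
    have posc: "1 + c * A \<phi> u > 0" if "u \<in> {0..t}" for u
    proof -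
      have "1 + (A \<phi> u / b) * (E - 1) > 0"
        using key[of "A \<phi> u / b" E] ab[OF that] b E by simp
      then show ?thesis by (simp add: c_def mult.commute)
    qed
    have pc: "1 + c * a > 0" using posc[OF s] by (simp add: a_def)
    have As: "A (Tcal t \<phi>) s = a / (1 + c * a)"
      unfolding chi a_def by (rule A_transform[OF assms(3) posc s])
    have Y: "1 + \<alpha> * (a / (1 + c * a)) > 0"
      using pc a0 assms(2) by (simp add: add_pos_nonneg)
    have alg: "(1 + c * a) * (1 + \<alpha> * (a / (1 + c * a))) = 1 + a / b * (E + \<alpha> * b - 1)"
    proof -
      have h1: "(1 + c * a) * (1 + \<alpha> * (a / (1 + c * a))) = 1 + (c * a + \<alpha> * a)"
        using pc by (simp add: field_simps)
      have h2: "c * a + \<alpha> * a = a / b * (E + \<alpha> * b - 1)"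
        unfolding c_def using b by (simp add: field_simps)
      show ?thesis using h1 h2 by simp
    qed
    have "Talpha \<alpha> (Tcal t \<phi>) s = \<phi> s - ln (1 + c * a) - ln (1 + \<alpha> * (a / (1 + c * a)))"
      unfolding Talpha_def As by (simp add: chi a_def)
    also have "\<dots> = \<phi> s - ln ((1 + c * a) * (1 + \<alpha> * (a / (1 + c * a))))"
      using ln_mult_pos[OF pc Y] by simp
    also have "\<dots> = \<phi> s - ln (1 + a / b * (E + \<alpha> * b - 1))" by (simp only: alg)
    also have "\<dots> = TT t (ln (exp (2 * \<phi> t) + \<alpha> * A \<phi> t)) \<phi> s"
    proof -
      have "E + \<alpha> * b > 0" using E b assms(2) by (simp add: add_pos_nonneg)
      then show ?thesis unfolding TT_def by (simp add: E_def a_def b_def)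
    qed
    finally show "Talpha \<alpha> (Tcal t \<phi>) s = TT t (ln (exp (2 * \<phi> t) + \<alpha> * A \<phi> t)) \<phi> s" .
  qed
qed

end
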